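(* Let $(q_n),(r_n)$ be complex sequences vanishing faster than any negative power of $|n|$ as $n\to\pm\infty$ with $1-q_nr_n\neq0$ and $1+q_nr_{n+1}\neq0$ for all $n\in\mathbb Z$. Set $D_n=\prod_{j=-\infty}^n(1-q_jr_j)$, $E_n=\prod_{j=-\infty}^n(1+q_jr_{j+1})$, and define $u_n=q_nE_{n-1}/D_n$ and $s_n=r_{n+1}D_n/E_n$. Then $$D_n=\frac1{\prod_{k=-\infty}^{n-1}(1+u_{k+1}s_k)},\qquad E_n=\frac1{\prod_{k=-\infty}^{n}(1-u_ks_k)},$$ $$q_n=u_n\prod_{k=-\infty}^{n-1}\frac{1-u_ks_k}{1+u_{k+1}s_k},\qquad r_n=s_{n-1}\prod_{k=-\infty}^{n-1}\frac{1+u_ks_{k-1}}{1-u_ks_k}.$$ *)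

theory Defs
  imports "HOL-Analysis.Analysis"
begin

definition rapid_decay :: "(int \<Rightarrow> complex) \<Rightarrow> bool" where
  "rapid_decay q \<longleftrightarrow>
     (\<forall>k::nat. ((\<lambda>n. real_of_int \<bar>n\<bar> ^ k * norm (q n)) \<longlongrightarrow> 0) at_top \<and>
               ((\<lambda>n. real_of_int \<bar>n\<bar> ^ k * norm (q n)) \<longlongrightarrow> 0) at_bot)"

definition lprod :: "(int \<Rightarrow> complex) \<Rightarrow> int \<Rightarrow> complex" where
  "lprod f n = (\<Prod>i. f (n - int i))"

end

theory Submission
  imports Defs
begin
lemma seq_to_at_bot:
  fixes h :: "int \<Rightarrow> complex"
  assumes "(\<lambda>N. h (- int N)) \<longlonglongrightarrow> L"
  shows "(h \<longlongrightarrow> L) at_bot"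
proof -
  have fl: "filterlim (\<lambda>m::int. nat (-m)) sequentially at_bot"
    unfolding filterlim_at_top
  proof (intro allI)
    fix Z :: nat
    show "eventually (\<lambda>m::int. Z \<le> nat (-m)) at_bot"
      unfolding eventually_at_bot_linorder by (rule exI[of _ "- int Z"]) auto
  qed
  have "((\<lambda>m. h (- int (nat (-m)))) \<longlongrightarrow> L) at_bot"
    using filterlim_compose[OF assms fl] by (simp add: o_def)
  moreover have "eventually (\<lambda>m. h (- int (nat (-m))) = h m) at_bot"
    unfolding eventually_at_bot_linorder by (rule exI[of _ 0]) auto
  ultimately show ?thesis by (rule Lim_transform_eventually)
qed

lemma lprod_props:
  fixes f :: "int \<Rightarrow> complex"
  assumes summ: "\<And>n. summable (\<lambda>i. norm (f (n - int i) - 1))" and nz: "\<And>j. f j \<noteq> 0"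
  shows "\<forall>n. lprod f n \<noteq> 0 \<and> lprod f n = f n * lprod f (n-1) \<and> (\<lambda>i. f (n - int i)) has_prod lprod f n"
    "(lprod f \<longlongrightarrow> 1) at_bot"
proof -
  have hp: "(\<lambda>i. f (n - int i)) has_prod lprod f n" for n
  proof -
    have "convergent_prod (\<lambda>i. f (n - int i))"
      by (rule abs_convergent_prod_imp_convergent_prod[OF summable_imp_abs_convergent_prod[OF summ]])
    thus ?thesis unfolding lprod_def by (rule convergent_prod_has_prod)
  qed
  have nzp: "lprod f n \<noteq> 0" for n
    unfolding lprod_def
    by (rule prodinf_nonzero[OF abs_convergent_prod_imp_convergent_prod[OF summable_imp_abs_convergent_prod[OF summ]]])
      (rule nz)
  have rec: "lprod f n = f n * lprod f (n-1)" for n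
  proof -
    have "(\<lambda>i. f (n - int (Suc i))) has_prod lprod f (n-1)"
      using hp[of "n-1"] by (simp add: algebra_simps)
    hence "(\<lambda>i. f (n - int i)) has_prod (lprod f (n-1) * f (n - int 0))"
      using has_prod_Suc_iff[of "\<lambda>i. f (n - int i)"] nz by simp
    thus ?thesis using has_prod_unique2 hp[of n] by (simp add: mult.commute)
  qed
  show "\<forall>n. lprod f n \<noteq> 0 \<and> lprod f n = f n * lprod f (n-1) \<and> (\<lambda>i. f (n - int i)) has_prod lprod f n"
    by (intro allI conjI nzp rec hp)
  have part: "lprod f 0 = lprod f (- int N - 1) * (\<Prod>i\<le>N. f (0 - int i))" for N
  proof (induction N)
    case 0 then show ?case using rec[of 0] by simp
  next
    case (Suc N)
    have r: "lprod f (- int N - 1) = f (- int N - 1) * lprod f (- int N - 1 - 1)" by (rule rec)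
    have e1: "- int (Suc N) = - int N - 1" by simp
    have p: "(\<Prod>i\<le>Suc N. f (0 - int i)) = f (- int N - 1) * (\<Prod>i\<le>N. f (0 - int i))"
    proof -
      have e2: "0 - int (Suc N) = - int N - 1" by simp
      show ?thesis unfolding prod.atMost_Suc e2 by (rule mult.commute)
    qed
    have "lprod f 0 = lprod f (- int N - 1) * (\<Prod>i\<le>N. f (0 - int i))" by (rule Suc.IH)
    also have "\<dots> = lprod f (- int N - 1 - 1) * (f (- int N - 1) * (\<Prod>i\<le>N. f (0 - int i)))"
      unfolding r by (simp only: mult_ac)
    also have "\<dots> = lprod f (- int (Suc N) - 1) * (\<Prod>i\<le>Suc N. f (0 - int i))"
      unfolding p e1 by (rule refl)
    finally show ?case .
  qed
  have pnz: "(\<Prod>i\<le>N. f (0 - int i)) \<noteq> 0" for N using nz by simp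
  have "(\<lambda>N. \<Prod>i\<le>N. f (0 - int i)) \<longlonglongrightarrow> lprod f 0"
    using hp[of 0] nzp[of 0] unfolding has_prod_def raw_has_prod_def by auto
  hence "(\<lambda>N. lprod f 0 / (\<Prod>i\<le>N. f (0 - int i))) \<longlonglongrightarrow> lprod f 0 / lprod f 0"
    by (intro tendsto_intros) (use nzp in auto)
  moreover have "(\<lambda>N. lprod f 0 / (\<Prod>i\<le>N. f (0 - int i))) = (\<lambda>N. lprod f (- int N - 1))"
  proof (rule ext)
    fix N
    show "lprod f 0 / (\<Prod>i\<le>N. f (0 - int i)) = lprod f (- int N - 1)"
      using pnz[of N] by (subst part[of N]) simp
  qed
  moreover have "lprod f 0 / lprod f 0 = 1" using nzp[of 0] by simp
  ultimately have "(\<lambda>N. lprod f (- int N - 1)) \<longlonglongrightarrow> 1" by simp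
  moreover have "(\<lambda>N. lprod f (- int (Suc N))) = (\<lambda>N. lprod f (- int N - 1))"
    by (rule ext, rule arg_cong[where f="lprod f"]) simp
  ultimately have "(\<lambda>N. lprod f (- int (Suc N))) \<longlonglongrightarrow> 1" by simp
  hence "(\<lambda>N. lprod f (- int N)) \<longlonglongrightarrow> 1" by (rule LIMSEQ_imp_Suc)
  thus "(lprod f \<longlongrightarrow> 1) at_bot" by (rule seq_to_at_bot)
qed

lemma lprod_tele:
  fixes F g :: "int \<Rightarrow> complex"
  assumes nz: "\<And>k. F k \<noteq> 0" and lim: "(F \<longlongrightarrow> L) at_bot" and L: "L \<noteq> 0"
    and g: "\<And>k. g k = F (k-1) / F k"
  shows "lprod g n = L / F n"
proof -
  have pp: "(\<Prod>i\<le>N. g (n - int i)) = F (n - int N - 1) / F n" for N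
  proof (induction N)
    case 0 then show ?case by (simp add: g)
  next
    case (Suc N)
    have "(\<Prod>i\<le>Suc N. g (n - int i)) = F (n - int N - 1) / F n * g (n - int (Suc N))"
      using Suc by simp
    also have "\<dots> = F (n - int (Suc N) - 1) / F n"
      using nz by (simp add: g algebra_simps)
    finally show ?case .
  qed
  have fl: "filterlim (\<lambda>N::nat. n - int N - 1) at_bot sequentially"
    unfolding filterlim_at_bot
  proof (intro allI)
    fix Z :: int
    show "eventually (\<lambda>N::nat. n - int N - 1 \<le> Z) sequentially"
      unfolding eventually_sequentially by (rule exI[of _ "nat (n - Z)"]) auto
  qed
  have "(\<lambda>N. F (n - int N - 1)) \<longlonglongrightarrow> L"
    using filterlim_compose[OF lim fl] by (simp add: o_def)
  hence "(\<lambda>N. F (n - int N - 1) / F n) \<longlonglongrightarrow> L / F n"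
    by (intro tendsto_intros) (use nz in auto)
  hence "raw_has_prod (\<lambda>i. g (n - int i)) 0 (L / F n)"
    unfolding raw_has_prod_def using pp L nz by simp
  hence "(\<lambda>i. g (n - int i)) has_prod (L / F n)" unfolding has_prod_def by blast
  thus ?thesis unfolding lprod_def using has_prod_unique by metis
qed

lemma fl_nat_bot: "filterlim (\<lambda>i::nat. a - int i) at_bot sequentially"
  unfolding filterlim_at_bot
proof (intro allI)
  fix Z :: int
  show "eventually (\<lambda>N::nat. a - int N \<le> Z) sequentially"
    unfolding eventually_sequentially by (rule exI[of _ "nat (a - Z)"]) auto
qed

lemma pw_bound:
  fixes x y :: real and m n :: int and i :: nat
  assumes "real_of_int \<bar>m\<bar> ^ 2 * x < 1" "y < 1" "x \<ge> 0" "y \<ge> 0"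
    "m = n - int i" "i \<ge> 2 * nat \<bar>n\<bar>" "i \<ge> 1"
  shows "x * y \<le> 4 * inverse (real i ^ 2)"
proof -
  have "real i \<le> 2 * real_of_int \<bar>m\<bar>" using assms(5,6) by linarith
  hence "real i ^ 2 \<le> (2 * real_of_int \<bar>m\<bar>) ^ 2" by (intro power_mono) auto
  hence "real i ^ 2 * (x * y) \<le> (2 * real_of_int \<bar>m\<bar>) ^ 2 * (x * y)"
    using assms(3,4) by (intro mult_right_mono) auto
  also have "\<dots> = 4 * (real_of_int \<bar>m\<bar> ^ 2 * x) * y"
    by (simp add: power_mult_distrib)
  also have "\<dots> \<le> 4 * 1 * 1"
    using assms by (intro mult_mono) auto
  finally have "real i ^ 2 * (x * y) \<le> 4" by simp
  moreover have "real i ^ 2 > 0" using assms(7) by simp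
  ultimately show ?thesis by (simp add: field_simps)
qed

lemma decay_summable:
  assumes "rapid_decay q" "rapid_decay r"
  shows "summable (\<lambda>i. norm (q (n - int i) * r (n - int i + c)))"
proof -
  have q2: "((\<lambda>m. real_of_int \<bar>m\<bar> ^ 2 * norm (q m)) \<longlongrightarrow> 0) at_bot"
    using assms(1) unfolding rapid_decay_def by blast
  have r0: "((\<lambda>m. norm (r m)) \<longlongrightarrow> 0) at_bot"
  proof -
    have "((\<lambda>m. real_of_int \<bar>m\<bar> ^ 0 * norm (r m)) \<longlongrightarrow> 0) at_bot"
      using assms(2) unfolding rapid_decay_def by blast
    thus ?thesis by simp
  qed
  have A: "(\<lambda>i. real_of_int \<bar>n - int i\<bar> ^ 2 * norm (q (n - int i))) \<longlonglongrightarrow> 0"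
    using filterlim_compose[OF q2 fl_nat_bot[of n]] by (simp add: o_def)
  have B: "(\<lambda>i. norm (r (n + c - int i))) \<longlonglongrightarrow> 0"
    using filterlim_compose[OF r0 fl_nat_bot[of "n + c"]] by (simp add: o_def)
  have "eventually (\<lambda>i. real_of_int \<bar>n - int i\<bar> ^ 2 * norm (q (n - int i)) < 1) sequentially"
    using order_tendstoD(2)[OF A] by simp
  moreover have "eventually (\<lambda>i. norm (r (n + c - int i)) < 1) sequentially"
    using order_tendstoD(2)[OF B] by simp
  moreover have "eventually (\<lambda>i. i \<ge> 2 * nat \<bar>n\<bar> \<and> i \<ge> 1) sequentially"
    unfolding eventually_sequentially by (rule exI[of _ "2 * nat \<bar>n\<bar> + 1"]) auto
  ultimately have "eventually (\<lambda>i. norm (norm (q (n - int i) * r (n - int i + c)))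
      \<le> 4 * inverse (real i ^ 2)) sequentially"
  proof eventually_elim
    case (elim i)
    have e: "r (n - int i + c) = r (n + c - int i)" by (rule arg_cong[where f=r]) simp
    have b: "norm (q (n - int i)) * norm (r (n + c - int i)) \<le> 4 * inverse (real i ^ 2)"
      by (rule pw_bound[OF elim(1) elim(2) norm_ge_zero norm_ge_zero refl conjunct1[OF elim(3)] conjunct2[OF elim(3)]])
    have "norm (norm (q (n - int i) * r (n - int i + c))) = norm (q (n - int i)) * norm (r (n + c - int i))"
      unfolding e by (simp add: norm_mult)
    then show ?case using b by (simp only:)
  qed
  moreover have "summable (\<lambda>i. 4 * inverse (real i ^ 2))"
    by (intro summable_mult inverse_power_summable) simp
  ultimately show ?thesis by (rule summable_comparison_test_ev)
qed

lemma alg1: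
  fixes a b c d e :: complex
  assumes "d \<noteq> 0" "e = (1 + a * b) * c" "e \<noteq> 0"
  shows "1 - (a * c / d) * (b * d / e) = c / e"
  using assms by (simp add: field_simps)

lemma alg2:
  fixes a b c d e :: complex
  assumes "e \<noteq> 0" "d' = (1 - a * b) * d" "d' \<noteq> 0"
  shows "1 + (a * e / d') * (b * d / e) = d / d'"
  using assms by (simp add: field_simps)

lemma alg3:
  fixes a b c d :: complex
  shows "(a / b) / (c / d) = a / c / (b / d)"
  by (simp add: field_simps)

lemma alg4:
  fixes q e d :: complex
  assumes "e \<noteq> 0" "d \<noteq> 0"
  shows "q = q * e / d * (1 / (e / d))"
  using assms by (simp add: field_simps)

theorem proposition3p2:
  fixes q r :: "int \<Rightarrow> complex"
    and D E u s :: "int \<Rightarrow> complex"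
  assumes "rapid_decay q" and "rapid_decay r"
    and "\<And>n. 1 - q n * r n \<noteq> 0"
    and "\<And>n. 1 + q n * r (n + 1) \<noteq> 0"
    and D_def: "\<And>n. D n = lprod (\<lambda>j. 1 - q j * r j) n"
    and E_def: "\<And>n. E n = lprod (\<lambda>j. 1 + q j * r (j + 1)) n"
    and u_def: "\<And>n. u n = q n * E (n - 1) / D n"
    and s_def: "\<And>n. s n = r (n + 1) * D n / E n"
  shows "\<forall>n. D n = 1 / lprod (\<lambda>k. 1 + u (k + 1) * s k) (n - 1)
            \<and> E n = 1 / lprod (\<lambda>k. 1 - u k * s k) n
            \<and> q n = u n * lprod (\<lambda>k. (1 - u k * s k) / (1 + u (k + 1) * s k)) (n - 1)
            \<and> r n = s (n - 1) * lprod (\<lambda>k. (1 + u k * s (k - 1)) / (1 - u k * s k)) (n - 1)"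
proof -
  have sD: "summable (\<lambda>i. norm ((1 - q (n - int i) * r (n - int i)) - 1))" for n
    using decay_summable[OF assms(1,2), of n 0] by (simp add: norm_minus_commute)
  have sE: "summable (\<lambda>i. norm ((1 + q (n - int i) * r (n - int i + 1)) - 1))" for n
    using decay_summable[OF assms(1,2), of n 1] by simp
  note PD = lprod_props[of "\<lambda>j. 1 - q j * r j", OF sD assms(3)]
  note PE = lprod_props[of "\<lambda>j. 1 + q j * r (j + 1)", OF sE assms(4)]
  have Dnz: "D n \<noteq> 0" and Drec: "D n = (1 - q n * r n) * D (n-1)" for n
    using PD(1) unfolding D_def by blast+
  have Enz: "E n \<noteq> 0" and Erec: "E n = (1 + q n * r (n+1)) * E (n-1)" for n
    using PE(1) unfolding E_def by blast+
  have Dlim: "(D \<longlongrightarrow> 1) at_bot"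
  proof -
    have "D = lprod (\<lambda>j. 1 - q j * r j)" by (rule ext) (rule D_def)
    thus ?thesis using PD(2) by simp
  qed
  have Elim: "(E \<longlongrightarrow> 1) at_bot"
  proof -
    have "E = lprod (\<lambda>j. 1 + q j * r (j + 1))" by (rule ext) (rule E_def)
    thus ?thesis using PE(2) by simp
  qed
  have sh: "filterlim (\<lambda>k::int. k + 1) at_bot at_bot"
    unfolding filterlim_at_bot
  proof (intro allI)
    fix Z :: int
    show "eventually (\<lambda>k::int. k + 1 \<le> Z) at_bot"
      unfolding eventually_at_bot_linorder by (rule exI[of _ "Z - 1"]) auto
  qed
  have D1lim: "((\<lambda>k. D (k + 1)) \<longlongrightarrow> 1) at_bot"
    using filterlim_compose[OF Dlim sh] by (simp add: o_def)
  have us1: "1 - u k * s k = E (k-1) / E k" for k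
  proof -
    have "1 - u k * s k = 1 - (q k * E (k-1) / D k) * (r (k+1) * D k / E k)"
      by (simp only: u_def s_def)
    also have "\<dots> = E (k-1) / E k"
      by (rule alg1) (use Dnz Enz Erec[of k] in auto)
    finally show ?thesis .
  qed
  have us2: "1 + u (k+1) * s k = D k / D (k+1)" for k
  proof -
    have "1 + u (k+1) * s k = 1 + (q (k+1) * E k / D (k+1)) * (r (k+1) * D k / E k)"
      by (simp only: u_def s_def add_diff_cancel_right')
    also have "\<dots> = D k / D (k+1)"
      by (rule alg2) (use Dnz Enz Drec[of "k+1"] in auto)
    finally show ?thesis .
  qed
  have us3: "1 + u k * s (k-1) = D (k-1) / D k" for k
    using us2[of "k-1"] by (simp only: diff_add_cancel)
  show ?thesis
  proof (intro allI conjI)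
    fix n
    have "lprod (\<lambda>k. 1 + u (k + 1) * s k) (n - 1) = 1 / D (n - 1 + 1)"
      by (rule lprod_tele[where F="\<lambda>k. D (k+1)"]) (use Dnz D1lim us2 in auto)
    thus "D n = 1 / lprod (\<lambda>k. 1 + u (k + 1) * s k) (n - 1)" by (simp only: diff_add_cancel) simp
    have "lprod (\<lambda>k. 1 - u k * s k) n = 1 / E n"
      by (rule lprod_tele[where F=E]) (use Enz Elim us1 in auto)
    thus "E n = 1 / lprod (\<lambda>k. 1 - u k * s k) n" by simp
    have "lprod (\<lambda>k. (1 - u k * s k) / (1 + u (k + 1) * s k)) (n - 1) = 1 / (E (n-1) / D (n - 1 + 1))"
    proof (rule lprod_tele[where F="\<lambda>k. E k / D (k+1)"])
      show "\<And>k. E k / D (k+1) \<noteq> 0" using Enz Dnz by simp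
      show "((\<lambda>k. E k / D (k+1)) \<longlongrightarrow> 1) at_bot"
        using tendsto_divide[OF Elim D1lim] by simp
      show "\<And>k. (1 - u k * s k) / (1 + u (k + 1) * s k) = E (k - 1) / D (k - 1 + 1) / (E k / D (k + 1))"
        unfolding us1 us2 diff_add_cancel by (rule alg3)
    qed simp
    hence L1: "lprod (\<lambda>k. (1 - u k * s k) / (1 + u (k + 1) * s k)) (n - 1) = 1 / (E (n-1) / D n)"
      by (simp only: diff_add_cancel)
    show "q n = u n * lprod (\<lambda>k. (1 - u k * s k) / (1 + u (k + 1) * s k)) (n - 1)"
      unfolding L1 u_def[of n] by (rule alg4[OF Enz Dnz])
    have "lprod (\<lambda>k. (1 + u k * s (k - 1)) / (1 - u k * s k)) (n - 1) = 1 / (D (n-1) / E (n - 1))"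
    proof (rule lprod_tele[where F="\<lambda>k. D k / E k"])
      show "\<And>k. D k / E k \<noteq> 0" using Enz Dnz by simp
      show "((\<lambda>k. D k / E k) \<longlongrightarrow> 1) at_bot"
        using tendsto_divide[OF Dlim Elim] by simp
      show "\<And>k. (1 + u k * s (k - 1)) / (1 - u k * s k) = D (k - 1) / E (k - 1) / (D k / E k)"
        unfolding us1 us3 by (rule alg3)
    qed simp
    note L2 = this
    have s1: "s (n - 1) = r n * D (n-1) / E (n-1)"
      using s_def[of "n-1"] by simp
    show "r n = s (n - 1) * lprod (\<lambda>k. (1 + u k * s (k - 1)) / (1 - u k * s k)) (n - 1)"
      unfolding L2 s1 by (rule alg4[OF Dnz Enz])
  qed
qed

end
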